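(* Let $\alpha$ be an algebraic integer lying in a quadratic number field. Then there is a natural number $n$ such that $\alpha+n$ is a chromatic root.
   Context: For a finite simple graph $G$, the chromatic polynomial $P_G(q)$ is the unique polynomial whose value at each positive integer $q$ is the number of proper colourings of $G$ with $q$ colours. A chromatic root is a complex number $\alpha$ such that $P_G(\alpha)=0$ for some finite simple graph $G$. A quadratic number field is a field extension of $\mathbb{Q}$ of degree $2$. *)

theory Defs
  imports "HOL-Computational_Algebra.Polynomial" "HOL-Library.FuncSet" Complex_Main
begin

definition finite_simple_graph :: "nat set \<Rightarrow> (nat \<Rightarrow> nat \<Rightarrow> bool) \<Rightarrow> bool" where
  "finite_simple_graph V E \<longleftrightarrow> finite V \<and> (\<forall>u v. E u v \<longrightarrow> E v u) \<and> (\<forall>u. \<not> E u u)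
     \<and> (\<forall>u v. E u v \<longrightarrow> u \<in> V \<and> v \<in> V)"

definition num_proper_colourings :: "nat set \<Rightarrow> (nat \<Rightarrow> nat \<Rightarrow> bool) \<Rightarrow> nat \<Rightarrow> nat" where
  "num_proper_colourings V E q =
     card {c \<in> V \<rightarrow>\<^sub>E {..<q}. \<forall>u\<in>V. \<forall>v\<in>V. E u v \<longrightarrow> c u \<noteq> c v}"

definition chromatic_poly :: "nat set \<Rightarrow> (nat \<Rightarrow> nat \<Rightarrow> bool) \<Rightarrow> int poly" where
  "chromatic_poly V E = (THE p. \<forall>q::nat. q > 0 \<longrightarrow> poly p (int q) = int (num_proper_colourings V E q))"

definition chromatic_root :: "complex \<Rightarrow> bool" where
  "chromatic_root \<alpha> \<longleftrightarrow> (\<exists>V E. finite_simple_graph V E \<and>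
       poly (map_poly of_int (chromatic_poly V E)) \<alpha> = 0)"

text \<open>A quadratic number field, viewed as a subfield K of the complex numbers
  of degree 2 over the rationals: K has a Q-basis {1, w}.\<close>
definition subfield_of_complex :: "complex set \<Rightarrow> bool" where
  "subfield_of_complex K \<longleftrightarrow> 0 \<in> K \<and> 1 \<in> K \<and> (\<forall>x\<in>K. \<forall>y\<in>K. x + y \<in> K \<and> x * y \<in> K)
     \<and> (\<forall>x\<in>K. - x \<in> K) \<and> (\<forall>x\<in>K. x \<noteq> 0 \<longrightarrow> inverse x \<in> K)"

definition quadratic_number_field :: "complex set \<Rightarrow> bool" where
  "quadratic_number_field K \<longleftrightarrow> subfield_of_complex K \<and>
     (\<exists>w\<in>K. \<forall>x\<in>K. \<exists>!ab. fst ab \<in> \<rat> \<and> snd ab \<in> \<rat> \<and> x = fst ab + snd ab * w)"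

end

theory Submission
  imports Defs "Berlekamp_Zassenhaus.Factor_Bound"
begin

definition pcols :: "nat set \<Rightarrow> (nat \<Rightarrow> nat \<Rightarrow> bool) \<Rightarrow> nat \<Rightarrow> (nat \<Rightarrow> nat) set" where
  "pcols V E q = {c \<in> V \<rightarrow>\<^sub>E {..<q}. \<forall>u\<in>V. \<forall>v\<in>V. E u v \<longrightarrow> c u \<noteq> c v}"

definition gext :: "(nat \<Rightarrow> nat \<Rightarrow> bool) \<Rightarrow> nat \<Rightarrow> nat set \<Rightarrow> nat \<Rightarrow> nat \<Rightarrow> bool" where
  "gext E v S = (\<lambda>x y. E x y \<or> (x = v \<and> y \<in> S) \<or> (y = v \<and> x \<in> S))"

lemma finite_pcols: "finite V \<Longrightarrow> finite (pcols V E q)"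
  unfolding pcols_def by (rule finite_subset[OF _ finite_PiE[of V "\<lambda>_. {..<q}"]]) auto

lemma pcols_gext:
  assumes V: "v \<notin> V" "S \<subseteq> V" and E: "\<forall>x y. E x y \<longrightarrow> x \<in> V \<and> y \<in> V"
  shows "pcols (insert v V) (gext E v S) q = (\<lambda>(c,k). c(v:=k)) ` (SIGMA c:pcols V E q. {..<q} - c ` S)"
proof
  show "pcols (insert v V) (gext E v S) q \<subseteq> (\<lambda>(c,k). c(v:=k)) ` (SIGMA c:pcols V E q. {..<q} - c ` S)"
  proof
    fix d assume d: "d \<in> pcols (insert v V) (gext E v S) q"
    define c where "c = d(v:=undefined)"
    have "d = c(v := d v)" unfolding c_def by simp
    moreover have "c \<in> pcols V E q"
      using d V unfolding pcols_def c_def gext_def by (auto simp: PiE_def extensional_def)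
    moreover have "d v \<in> {..<q} - c ` S"
      using d V unfolding pcols_def c_def gext_def by (auto simp: PiE_def)
    ultimately show "d \<in> (\<lambda>(c,k). c(v:=k)) ` (SIGMA c:pcols V E q. {..<q} - c ` S)"
      by (intro image_eqI[where x="(c, d v)"]) auto
  qed
next
  show "(\<lambda>(c,k). c(v:=k)) ` (SIGMA c:pcols V E q. {..<q} - c ` S) \<subseteq> pcols (insert v V) (gext E v S) q"
  proof
    fix x assume "x \<in> (\<lambda>(c,k). c(v:=k)) ` (SIGMA c:pcols V E q. {..<q} - c ` S)"
    then obtain c k where x: "x = c(v:=k)" and c: "c \<in> pcols V E q" and k: "k \<in> {..<q} - c ` S"
      by auto
    have cv: "\<And>x. x \<in> S \<Longrightarrow> c x \<noteq> k" using k by auto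
    show "x \<in> pcols (insert v V) (gext E v S) q"
      using c k V E cv unfolding x pcols_def gext_def
      by (auto simp: PiE_def extensional_def)
  qed
qed

lemma card_pcols_gext:
  assumes V: "finite V" "v \<notin> V" "S \<subseteq> V" and E: "\<forall>x y. E x y \<longrightarrow> x \<in> V \<and> y \<in> V"
  shows "int (card (pcols (insert v V) (gext E v S) q)) = (\<Sum>c\<in>pcols V E q. (int q - int (card (c ` S))))"
proof -
  have inj: "inj_on (\<lambda>(c,k). c(v:=k)) (SIGMA c:pcols V E q. {..<q} - c ` S)"
  proof (rule inj_onI, clarify)
    fix c k c' k'
    assume c: "c \<in> pcols V E q" "c' \<in> pcols V E q" and eq: "c(v := k) = c'(v := k')"
    have "c v = undefined" "c' v = undefined" using c V unfolding pcols_def by (auto simp: PiE_def extensional_def)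
    then show "c = c' \<and> k = k'" using eq
      by (metis fun_upd_idem fun_upd_same fun_upd_upd)
  qed
  have sub: "\<And>c. c \<in> pcols V E q \<Longrightarrow> c ` S \<subseteq> {..<q}" using V unfolding pcols_def by (auto simp: PiE_def)
  have "card (pcols (insert v V) (gext E v S) q) = card (SIGMA c:pcols V E q. {..<q} - c ` S)"
    unfolding pcols_gext[OF V(2,3) E] by (rule card_image[OF inj])
  also have "\<dots> = (\<Sum>c\<in>pcols V E q. card ({..<q} - c ` S))"
    by (rule card_SigmaI) (auto simp: finite_pcols V)
  finally have "int (card (pcols (insert v V) (gext E v S) q)) = (\<Sum>c\<in>pcols V E q. int (card ({..<q} - c ` S)))"
    by simp
  also have "\<dots> = (\<Sum>c\<in>pcols V E q. (int q - int (card (c ` S))))"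
  proof (rule sum.cong[OF refl])
    fix c assume "c \<in> pcols V E q"
    then have "card ({..<q} - c ` S) = q - card (c ` S)" "card (c ` S) \<le> q"
      using sub[of c] card_mono[of "{..<q}" "c ` S"] by (auto simp: card_Diff_subset finite_subset)
    then show "int (card ({..<q} - c ` S)) = int q - int (card (c ` S))" by simp
  qed
  finally show ?thesis .
qed

definition Ecl :: "nat \<Rightarrow> nat \<Rightarrow> nat \<Rightarrow> bool" where
  "Ecl m x y = (x < m \<and> y < m \<and> x \<noteq> y)"

lemma Ecl_Suc: "gext (Ecl m) m {..<m} = Ecl (Suc m)"
  by (auto simp: fun_eq_iff gext_def Ecl_def)

lemma pcols_inj:
  assumes "c \<in> pcols V E q" "S \<subseteq> V" "\<forall>x\<in>S. \<forall>y\<in>S. x \<noteq> y \<longrightarrow> E x y"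
  shows "inj_on c S"
  using assms unfolding pcols_def inj_on_def by blast

lemma card_clique: "int (card (pcols {..<m} (Ecl m) q)) = (\<Prod>i<m. int q - int i)"
proof (induction m)
  case 0
  have "pcols {..<0} (Ecl 0) q = {\<lambda>_. undefined}" unfolding pcols_def by auto
  then show ?case by simp
next
  case (Suc m)
  have "int (card (pcols {..<Suc m} (Ecl (Suc m)) q)) = int (card (pcols (insert m {..<m}) (gext (Ecl m) m {..<m}) q))"
    by (simp add: Ecl_Suc lessThan_Suc)
  also have "\<dots> = (\<Sum>c\<in>pcols {..<m} (Ecl m) q. (int q - int (card (c ` {..<m}))))"
    by (rule card_pcols_gext) (auto simp: Ecl_def)
  also have "\<dots> = (\<Sum>c\<in>pcols {..<m} (Ecl m) q. (int q - int m))"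
  proof (rule sum.cong[OF refl])
    fix c assume c: "c \<in> pcols {..<m} (Ecl m) q"
    have "inj_on c {..<m}" by (rule pcols_inj[OF c]) (auto simp: Ecl_def)
    then show "int q - int (card (c ` {..<m})) = int q - int m" by (simp add: card_image)
  qed
  also have "\<dots> = (\<Prod>i<Suc m. int q - int i)" using Suc by simp
  finally show ?case .
qed

lemma card_clique_plus:
  assumes "S \<subseteq> {..<m}"
  shows "int (card (pcols (insert m {..<m}) (gext (Ecl m) m S) q)) = (\<Prod>i<m. int q - int i) * (int q - int (card S))"
proof -
  have "int (card (pcols (insert m {..<m}) (gext (Ecl m) m S) q)) = (\<Sum>c\<in>pcols {..<m} (Ecl m) q. (int q - int (card (c ` S))))"
    by (rule card_pcols_gext) (use assms in \<open>auto simp: Ecl_def\<close>)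
  also have "\<dots> = (\<Sum>c\<in>pcols {..<m} (Ecl m) q. (int q - int (card S)))"
  proof (rule sum.cong[OF refl])
    fix c assume c: "c \<in> pcols {..<m} (Ecl m) q"
    have "inj_on c S" by (rule pcols_inj[OF c]) (use assms in \<open>auto simp: Ecl_def\<close>)
    then show "int q - int (card (c ` S)) = int q - int (card S)" by (simp add: card_image)
  qed
  also have "\<dots> = (\<Prod>i<m. int q - int i) * (int q - int (card S))" using card_clique[of m q] by simp
  finally show ?thesis .
qed

definition Gv :: "nat \<Rightarrow> nat \<Rightarrow> nat set" where
  "Gv a b = insert (Suc (a+b)) (insert (a+b) {..<a+b})"

definition Ge :: "nat \<Rightarrow> nat \<Rightarrow> nat \<Rightarrow> nat \<Rightarrow> bool" where
  "Ge a b = gext (gext (Ecl (a+b)) (a+b) {..<a}) (Suc (a+b)) (insert (a+b) {a..<a+b})"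

lemma Gcount:
  "int (card (pcols (Gv a b) (Ge a b) q)) =
     (\<Prod>i<a+b. int q - int i) * ((int q - int a) * (int q - int b) - (int q - int a - int b))"
proof -
  define m where "m = a + b"
  define V1 where "V1 = insert m {..<m}"
  define E1 where "E1 = gext (Ecl m) m {..<a}"
  define E2 where "E2 = gext (Ecl m) m {..<m}"
  define F where "F = (\<Prod>i<m. int q - int i)"
  have fin: "finite (pcols V1 E1 q)" by (rule finite_pcols) (simp add: V1_def)
  have "int (card (pcols (Gv a b) (Ge a b) q)) = (\<Sum>c\<in>pcols V1 E1 q. (int q - int (card (c ` (insert m {a..<m})))))"
    unfolding Gv_def Ge_def m_def[symmetric] V1_def E1_def
    by (rule card_pcols_gext) (auto simp: Ecl_def gext_def m_def)
  also have "\<dots> = (\<Sum>c\<in>pcols V1 E1 q. ((int q - int b) - (if c m \<in> c ` {a..<m} then 0 else 1)))"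
  proof (rule sum.cong[OF refl])
    fix c assume c: "c \<in> pcols V1 E1 q"
    have "inj_on c {a..<m}" by (rule pcols_inj[OF c]) (auto simp: V1_def E1_def gext_def Ecl_def)
    then have "card (c ` {a..<m}) = b" by (simp add: card_image m_def)
    then show "int q - int (card (c ` (insert m {a..<m}))) = (int q - int b) - (if c m \<in> c ` {a..<m} then 0 else 1)"
      by (simp add: card_insert_if)
  qed
  also have "\<dots> = (\<Sum>c\<in>pcols V1 E1 q. (int q - int b)) - (\<Sum>c\<in>pcols V1 E1 q. (if c m \<in> c ` {a..<m} then 0 else 1))"
    by (simp add: sum_subtractf)
  also have "(\<Sum>c\<in>pcols V1 E1 q. (if c m \<in> c ` {a..<m} then 0 else 1::int)) = int (card {c\<in>pcols V1 E1 q. c m \<notin> c ` {a..<m}})"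
    using fin by (simp add: sum.If_cases Int_def)
  also have "{c\<in>pcols V1 E1 q. c m \<notin> c ` {a..<m}} = pcols V1 E2 q"
  proof (intro equalityI subsetI)
    fix c assume "c \<in> {c\<in>pcols V1 E1 q. c m \<notin> c ` {a..<m}}"
    then have c: "c \<in> V1 \<rightarrow>\<^sub>E {..<q}" "\<And>u v. u \<in> V1 \<Longrightarrow> v \<in> V1 \<Longrightarrow> E1 u v \<Longrightarrow> c u \<noteq> c v"
      and cm: "c m \<notin> c ` {a..<m}" unfolding pcols_def by auto
    have "\<And>u v. u \<in> V1 \<Longrightarrow> v \<in> V1 \<Longrightarrow> E2 u v \<Longrightarrow> c u \<noteq> c v"
    proof -
      fix u v assume uv: "u \<in> V1" "v \<in> V1" "E2 u v"
      show "c u \<noteq> c v"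
      proof (cases "E1 u v")
        case True then show ?thesis using c(2) uv by blast
      next
        case False
        then have "(u = m \<and> v \<in> {a..<m}) \<or> (v = m \<and> u \<in> {a..<m})"
          using uv(3) unfolding E1_def E2_def gext_def Ecl_def by auto
        then show ?thesis using cm by (metis atLeastLessThan_iff image_eqI)
      qed
    qed
    then show "c \<in> pcols V1 E2 q" using c(1) unfolding pcols_def by auto
  next
    fix c assume "c \<in> pcols V1 E2 q"
    then have c: "c \<in> V1 \<rightarrow>\<^sub>E {..<q}" "\<And>u v. u \<in> V1 \<Longrightarrow> v \<in> V1 \<Longrightarrow> E2 u v \<Longrightarrow> c u \<noteq> c v"
      unfolding pcols_def by auto
    have "\<And>u v. E1 u v \<Longrightarrow> E2 u v" unfolding E1_def E2_def gext_def Ecl_def m_def by auto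
    then have "c \<in> pcols V1 E1 q" using c unfolding pcols_def by auto
    moreover have "c m \<notin> c ` {a..<m}"
    proof
      assume "c m \<in> c ` {a..<m}"
      then obtain v where v: "v \<in> {a..<m}" "c m = c v" by auto
      have "E2 m v" using v(1) unfolding E2_def gext_def by auto
      then show False using c(2)[of m v] v unfolding V1_def by auto
    qed
    ultimately show "c \<in> {c\<in>pcols V1 E1 q. c m \<notin> c ` {a..<m}}" by auto
  qed
  also have "int (card (pcols V1 E2 q)) = F * (int q - int m)"
    unfolding V1_def E2_def F_def by (subst card_clique_plus) auto
  also have "(\<Sum>c\<in>pcols V1 E1 q. (int q - int b)) = F * (int q - int a) * (int q - int b)"
  proof -
    have "int (card (pcols V1 E1 q)) = F * (int q - int a)"
      unfolding V1_def E1_def F_def using card_clique_plus[of "{..<a}" m q] by (simp add: m_def)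
    then show ?thesis by simp
  qed
  finally show ?thesis unfolding F_def m_def by (simp add: algebra_simps)
qed

interpretation of_rat_cpoly: map_poly_comm_ring_hom "of_rat :: rat \<Rightarrow> complex" ..

lemma monic_quad_int:
  fixes \<alpha> :: complex and U V :: rat
  assumes nq: "\<alpha> \<notin> \<rat>" and eq: "\<alpha>^2 + of_rat U * \<alpha> + of_rat V = 0" and ai: "algebraic_int \<alpha>"
  shows "\<exists>t s::int. \<alpha>^2 - of_int t * \<alpha> + of_int s = 0"
proof -
  obtain p where p: "poly (map_poly of_int p) \<alpha> = 0" "lead_coeff p = (1::int)"
    using ai algebraic_int_altdef_ipoly by blast
  define g :: "rat poly" where "g = [:V, U, 1:]"
  define pq where "pq = map_poly rat_of_int p"
  define h where "h = pq div g"
  define r0 where "r0 = pq mod g"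
  have g0: "g \<noteq> 0" and dg: "degree g = 2" unfolding g_def by auto
  have split: "pq = g * h + r0" unfolding h_def r0_def by (metis div_mult_mod_eq mult.commute)
  have "map_poly (of_rat :: rat \<Rightarrow> complex) pq = map_poly of_int p"
    unfolding pq_def by (subst map_poly_map_poly) (auto simp: o_def)
  then have e1: "poly (map_poly (of_rat :: rat \<Rightarrow> complex) pq) \<alpha> = 0" using p by simp
  have e2: "poly (map_poly (of_rat :: rat \<Rightarrow> complex) g) \<alpha> = 0"
    using eq unfolding g_def by (simp add: power2_eq_square algebra_simps)
  have e3: "poly (map_poly (of_rat :: rat \<Rightarrow> complex) r0) \<alpha> = 0"
    using e1 e2 unfolding split by (simp add: of_rat_cpoly.hom_mult of_rat_cpoly.hom_add)
  have "r0 = 0 \<or> degree r0 < 2" using degree_mod_less[OF g0, of pq] dg unfolding r0_def by auto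
  then have "degree r0 \<le> 1" by auto
  then have r0e: "r0 = [:Polynomial.coeff r0 0, Polynomial.coeff r0 1:]"
    by (intro poly_eqI) (auto simp: coeff_pCons coeff_eq_0 split: nat.splits)
  have "poly (map_poly (of_rat :: rat \<Rightarrow> complex) [:Polynomial.coeff r0 0, Polynomial.coeff r0 1:]) \<alpha> = 0"
    using e3 by (simp only: r0e[symmetric])
  then have lin: "of_rat (Polynomial.coeff r0 0) + of_rat (Polynomial.coeff r0 1) * \<alpha> = 0"
  proof -
    have "map_poly (of_rat :: rat \<Rightarrow> complex) [:Polynomial.coeff r0 0, Polynomial.coeff r0 1:] =
       [:of_rat (Polynomial.coeff r0 0), of_rat (Polynomial.coeff r0 1):]"
      by (intro poly_eqI) (simp add: coeff_map_poly coeff_pCons split: nat.splits)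
    then show ?thesis using \<open>poly (map_poly (of_rat :: rat \<Rightarrow> complex) [:Polynomial.coeff r0 0, Polynomial.coeff r0 1:]) \<alpha> = 0\<close>
      by (simp add: algebra_simps)
  qed
  have c1: "Polynomial.coeff r0 1 = 0"
  proof (rule ccontr)
    assume c: "Polynomial.coeff r0 1 \<noteq> 0"
    then have "\<alpha> = - of_rat (Polynomial.coeff r0 0) / of_rat (Polynomial.coeff r0 1)"
      using lin by (simp add: field_simps eq_neg_iff_add_eq_0 add.commute)
    then have "\<alpha> \<in> \<rat>" by simp
    with nq show False by simp
  qed
  then have "Polynomial.coeff r0 0 = 0" using lin by simp
  with c1 r0e have "r0 = 0" by simp
  then have pgh: "map_poly rat_of_int p = g * h" using split unfolding pq_def by simp
  have p0: "p \<noteq> 0" using p by auto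
  have cp: "content p = 1"
  proof -
    have "content p dvd 1" using content_dvd_coeff[of p "degree p"] p by simp
    then show ?thesis using content_ge_0_int[of p] by auto
  qed
  obtain r rg where rg: "rat_to_normalized_int_poly g = (r,rg)" by force
  obtain s sh where sh: "rat_to_normalized_int_poly h = (s,sh)" by force
  have pe: "p = rg * sh" by (rule rat_to_int_factor_content_1[OF cp pgh rg sh p0])
  from rat_to_normalized_int_poly[OF rg] have gr: "g = Polynomial.smult r (map_poly of_int rg)" and r0: "r > 0"
    by auto
  have "lead_coeff rg * lead_coeff sh = 1" using p(2) pe by (simp add: lead_coeff_mult)
  then have lc: "lead_coeff rg = 1 \<or> lead_coeff rg = -1" using zmult_eq_1_iff by blast
  have "lead_coeff g = r * of_int (lead_coeff rg)" using gr by simp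
  moreover have "lead_coeff g = 1" unfolding g_def by simp
  ultimately have "r * of_int (lead_coeff rg) = 1" by simp
  with lc r0 have "lead_coeff rg = 1" and r1: "r = 1" by auto
  with gr have ge: "g = map_poly of_int rg" by simp
  have "U = of_int (Polynomial.coeff rg 1)" "V = of_int (Polynomial.coeff rg 0)"
    using arg_cong[OF ge, of "\<lambda>f. Polynomial.coeff f 1"] arg_cong[OF ge, of "\<lambda>f. Polynomial.coeff f 0"]
    unfolding g_def by (simp_all add: coeff_map_poly)
  then have "\<alpha>^2 - of_int (- Polynomial.coeff rg 1) * \<alpha> + of_int (Polynomial.coeff rg 0) = 0"
    using eq by simp
  then show ?thesis by blast
qed

lemma quad_int:
  assumes K: "quadratic_number_field K" and aK: "\<alpha> \<in> K" and ai: "algebraic_int \<alpha>"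
  shows "\<exists>t s::int. \<alpha>^2 - of_int t * \<alpha> + of_int s = 0"
proof -
  from K obtain w where w: "w \<in> K"
    and uniq: "\<forall>x\<in>K. \<exists>!ab. fst ab \<in> \<rat> \<and> snd ab \<in> \<rat> \<and> x = fst ab + snd ab * w"
    unfolding quadratic_number_field_def by blast
  have sf: "subfield_of_complex K" using K unfolding quadratic_number_field_def by blast
  have aa: "\<alpha> * \<alpha> \<in> K" using sf aK unfolding subfield_of_complex_def by blast
  obtain a1 b1 where ab1: "a1 \<in> \<rat>" "b1 \<in> \<rat>" "\<alpha> = a1 + b1 * w"
    using uniq aK by (metis (no_types, lifting))
  obtain a2 b2 where ab2: "a2 \<in> \<rat>" "b2 \<in> \<rat>" "\<alpha> * \<alpha> = a2 + b2 * w"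
    using uniq aa by (metis (no_types, lifting))
  show ?thesis
  proof (cases "\<alpha> \<in> \<rat>")
    case True
    then have "\<alpha> \<in> \<int>" using ai rational_algebraic_int_is_int by blast
    then obtain k where k: "\<alpha> = of_int k" by (auto elim: Ints_cases)
    have "\<alpha>^2 - of_int (2*k) * \<alpha> + of_int (k^2) = 0" unfolding k by (simp add: power2_eq_square algebra_simps)
    then show ?thesis by blast
  next
    case False
    have b1: "b1 \<noteq> 0"
    proof
      assume "b1 = 0"
      then have "\<alpha> = a1" using ab1 by simp
      with ab1 False show False by simp
    qed
    define u where "u = - b2 / b1"
    define v where "v = b2 * a1 / b1 - a2"
    have uQ: "u \<in> \<rat>" "v \<in> \<rat>" unfolding u_def v_def using ab1 ab2 by auto
    have wE: "w = (\<alpha> - a1) / b1" using ab1 b1 by (simp add: field_simps)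
    have "\<alpha>^2 + u * \<alpha> + v = 0"
      unfolding u_def v_def power2_eq_square ab2(3) wE using b1 by (simp add: field_simps)
    moreover obtain U where "u = of_rat U" using uQ(1) by (auto elim: Rats_cases)
    moreover obtain V where "v = of_rat V" using uQ(2) by (auto elim: Rats_cases)
    ultimately have "\<alpha>^2 + of_rat U * \<alpha> + of_rat V = 0" by simp
    then show ?thesis using monic_quad_int[OF False _ ai] by blast
  qed
qed


interpretation of_int_cpoly: map_poly_comm_ring_hom "of_int :: int \<Rightarrow> complex" ..

lemma map_poly_of_int_mult:
  "map_poly (of_int :: int \<Rightarrow> complex) (p * q) = map_poly of_int p * map_poly of_int q"
  by (intro poly_eqI) (simp add: coeff_mult coeff_map_poly)

definition Gpoly :: "nat \<Rightarrow> nat \<Rightarrow> int poly" where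
  "Gpoly a b = (\<Prod>i<a+b. [:- int i, 1:]) * [:int (a*b+a+b), - int (a+b+1), 1:]"

lemma poly_Gpoly: "poly (Gpoly a b) (int q) = int (num_proper_colourings (Gv a b) (Ge a b) q)"
proof -
  have "num_proper_colourings (Gv a b) (Ge a b) q = card (pcols (Gv a b) (Ge a b) q)"
    by (simp add: num_proper_colourings_def pcols_def)
  then show ?thesis using Gcount[of a b q]
    by (simp add: Gpoly_def poly_prod algebra_simps power2_eq_square)
qed

lemma poly_uniq:
  fixes p r :: "int poly"
  assumes "\<forall>q::nat. q > 0 \<longrightarrow> poly p (int q) = poly r (int q)"
  shows "p = r"
proof (rule ccontr)
  assume "p \<noteq> r"
  then have "p - r \<noteq> 0" by simp
  then have fin: "finite {x. poly (p - r) x = 0}" by (rule poly_roots_finite)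
  have "int ` {1..} \<subseteq> {x. poly (p - r) x = 0}" using assms by auto
  then have "finite (int ` {1::nat..})" using fin finite_subset by blast
  then have "finite {1::nat..}" by (simp add: finite_image_iff)
  then obtain k where "{1::nat..} \<subseteq> {..<k}" using finite_nat_bounded by blast
  then have "k + 1 < k" using subsetD[of "{1::nat..}" "{..<k}" "k+1"] by simp
  then show False by simp
qed

lemma chrom: "chromatic_poly (Gv a b) (Ge a b) = Gpoly a b"
  unfolding chromatic_poly_def
proof (rule the1_equality)
  show "\<exists>!p. \<forall>q::nat. q > 0 \<longrightarrow> poly p (int q) = int (num_proper_colourings (Gv a b) (Ge a b) q)"
  proof (rule ex1I[of _ "Gpoly a b"])
    show "\<forall>q::nat. q > 0 \<longrightarrow> poly (Gpoly a b) (int q) = int (num_proper_colourings (Gv a b) (Ge a b) q)"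
      by (simp add: poly_Gpoly)
    fix p assume "\<forall>q::nat. q > 0 \<longrightarrow> poly p (int q) = int (num_proper_colourings (Gv a b) (Ge a b) q)"
    then show "p = Gpoly a b" by (intro poly_uniq) (simp add: poly_Gpoly)
  qed
  show "\<forall>q::nat. q > 0 \<longrightarrow> poly (Gpoly a b) (int q) = int (num_proper_colourings (Gv a b) (Ge a b) q)"
    by (simp add: poly_Gpoly)
qed

lemma fsg: "finite_simple_graph (Gv a b) (Ge a b)"
  unfolding finite_simple_graph_def Gv_def Ge_def gext_def Ecl_def by auto

lemma root:
  fixes \<alpha> :: complex
  assumes h1: "int a + int b + 1 = 2*int n + t"
    and h2: "int a*int b + int a + int b = s + int n^2 + t*int n"
    and h3: "\<alpha>^2 - of_int t * \<alpha> + of_int s = 0"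
  shows "poly (map_poly of_int (Gpoly a b)) (\<alpha> + of_nat n) = 0"
proof -
  define B where "B = int (a+b+1)"
  define C where "C = int (a*b+a+b)"
  have mq: "map_poly (of_int :: int \<Rightarrow> complex) [:C, - B, 1:] = [:of_int C, - of_int B, 1:]"
    by (intro poly_eqI) (simp add: coeff_map_poly coeff_pCons split: nat.splits)
  have hB: "(of_int B :: complex) = 2 * of_nat n + of_int t"
    using arg_cong[OF h1, of "of_int :: int \<Rightarrow> complex"] unfolding B_def by (simp add: algebra_simps)
  have hC: "(of_int C :: complex) = of_int s + of_nat n ^ 2 + of_int t * of_nat n"
    using arg_cong[OF h2, of "of_int :: int \<Rightarrow> complex"] unfolding C_def by simp
  have q0: "poly (map_poly (of_int :: int \<Rightarrow> complex) [:C, - B, 1:]) (\<alpha> + of_nat n) = 0"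
  proof -
    have "poly (map_poly (of_int :: int \<Rightarrow> complex) [:C, - B, 1:]) (\<alpha> + of_nat n)
       = of_int C - of_int B * (\<alpha> + of_nat n) + (\<alpha> + of_nat n)^2"
      unfolding mq by (simp add: algebra_simps power2_eq_square)
    also have "\<dots> = \<alpha>^2 - of_int t * \<alpha> + of_int s"
      unfolding hB hC by (simp add: algebra_simps power2_eq_square)
    finally show ?thesis using h3 by simp
  qed
  have "Gpoly a b = (\<Prod>i<a+b. [:- int i, 1:]) * [:C, - B, 1:]" unfolding Gpoly_def B_def C_def by simp
  then show ?thesis using q0 by (simp only: map_poly_of_int_mult poly_mult mult_zero_right)
qed

lemma params:
  fixes t s :: int
  shows "\<exists>a b n::nat. int a + int b + 1 = 2*int n + t \<and> int a*int b + int a + int b = s + int n^2 + t*int n"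
proof -
  define j where "j = \<bar>s\<bar>"
  define bb where "bb = j*(\<bar>t\<bar>+j) + s"
  have j0: "j \<ge> 0" by (simp add: j_def)
  have jj: "j * j \<ge> j"
  proof (cases "j = 0")
    case False
    then have "j \<ge> 1" using j0 by simp
    then show ?thesis using mult_left_mono[of 1 j j] j0 by simp
  qed simp
  have "j * \<bar>t\<bar> \<ge> 0" using j0 by simp
  moreover have "s + j \<ge> 0" unfolding j_def by linarith
  moreover have "bb = j*\<bar>t\<bar> + j*j + s" by (simp add: bb_def algebra_simps)
  ultimately have bb0: "bb \<ge> 0" using jj by linarith
  show ?thesis
  proof (cases "t \<ge> 0")
    case True
    have s: "s = bb - j*t - j*j" unfolding bb_def using True by (simp add: algebra_simps)
    have ea: "int (nat (bb + t + 2*j + 1)) = bb + t + 2*j + 1" using True bb0 j0 by simp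
    have eb: "int (nat bb) = bb" using bb0 by simp
    have en: "int (nat (bb + j + 1)) = bb + j + 1" using bb0 j0 by simp
    have "int (nat (bb + t + 2*j + 1)) + int (nat bb) + 1 = 2*int (nat (bb + j + 1)) + t \<and>
      int (nat (bb + t + 2*j + 1))*int (nat bb) + int (nat (bb + t + 2*j + 1)) + int (nat bb)
        = s + int (nat (bb + j + 1))^2 + t*int (nat (bb + j + 1))"
      unfolding ea eb en s by (simp add: algebra_simps power2_eq_square)
    then show ?thesis by blast
  next
    case False
    have s: "s = bb + j*t - j*j" unfolding bb_def using False by (simp add: algebra_simps)
    have ea: "int (nat (bb - t + 2*j + 1)) = bb - t + 2*j + 1" using False bb0 j0 by simp
    have eb: "int (nat bb) = bb" using bb0 by simp
    have en: "int (nat (bb + j + 1 - t)) = bb + j + 1 - t" using False bb0 j0 by simp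
    have "int (nat (bb - t + 2*j + 1)) + int (nat bb) + 1 = 2*int (nat (bb + j + 1 - t)) + t \<and>
      int (nat (bb - t + 2*j + 1))*int (nat bb) + int (nat (bb - t + 2*j + 1)) + int (nat bb)
        = s + int (nat (bb + j + 1 - t))^2 + t*int (nat (bb + j + 1 - t))"
      unfolding ea eb en s by (simp add: algebra_simps power2_eq_square)
    then show ?thesis by blast
  qed
qed

theorem theorem4:
  fixes \<alpha> :: complex and K :: "complex set"
  assumes "quadratic_number_field K" and "\<alpha> \<in> K" and "algebraic_int \<alpha>"
  shows "\<exists>n::nat. chromatic_root (\<alpha> + of_nat n)"
proof -
  obtain t s :: int where ts: "\<alpha>^2 - of_int t * \<alpha> + of_int s = 0"
    using quad_int[OF assms] by blast
  obtain a b n :: nat where h1: "int a + int b + 1 = 2*int n + t"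
    and h2: "int a*int b + int a + int b = s + int n^2 + t*int n"
    using params[of t s] by blast
  have "poly (map_poly of_int (chromatic_poly (Gv a b) (Ge a b))) (\<alpha> + of_nat n) = 0"
    using chrom[of a b] root[OF h1 h2 ts] by simp
  then have "chromatic_root (\<alpha> + of_nat n)"
    unfolding chromatic_root_def using fsg[of a b] by blast
  then show ?thesis by blast
qed

end
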